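(* Let $\lambda_1\ge\lambda_2>0$ and $D=\mathrm{diag}(\lambda_1,\lambda_2)$. The critical points of $\widetilde W_{1,0}(\cdot;D)$ on $SO(2)$ are exactly $R^{(1)}=\mathbb I_2$, $R^{(2)}=-\mathbb I_2$, and, in addition when $\lambda_1+\lambda_2>2$, the two rotations $$R^{(3)}_\pm=\begin{pmatrix}\frac{2}{\lambda_1+\lambda_2} & \mp\sqrt{1-\big(\frac{2}{\lambda_1+\lambda_2}\big)^2}\\ \pm\sqrt{1-\big(\frac{2}{\lambda_1+\lambda_2}\big)^2} & \frac{2}{\lambda_1+\lambda_2}\end{pmatrix},$$ with values $\widetilde W_{1,0}(R^{(1)};D)=(\lambda_1-1)^2+(\lambda_2-1)^2$, $\widetilde W_{1,0}(R^{(2)};D)=(\lambda_1+1)^2+(\lambda_2+1)^2$, $\widetilde W_{1,0}(R^{(3)}_\pm;D)=\frac12(\lambda_1-\lambda_2)^2$. Moreover: (i) $R^{(2)}$ is the global maximum of $\widetilde W_{1,0}(\cdot;D)$; (ii) if $\lambda_1+\lambda_2\le2$, $R^{(1)}$ is the global minimum; (iii) if $\lambda_1+\lambda_2>2$, $R^{(3)}_\pm$ are the global minima.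
   Context: $\mathrm{sym}(Y)=\tfrac12(Y+Y^T)$, $\|Y\|^2=\mathrm{tr}(Y^TY)$ (Frobenius norm). For an invertible matrix $G$, $\widetilde W_{1,0}(R;G)=\|\mathrm{sym}(R^TG-\mathbb I_n)\|^2$ for $R\in SO(n)$. *)

theory Defs
  imports "HOL-Analysis.Analysis"
begin

definition msym :: "real^'n^'n \<Rightarrow> real^'n^'n" where
  "msym Y = (1/2) *\<^sub>R (Y + transpose Y)"

definition frob_sq :: "real^'n^'n \<Rightarrow> real" where
  "frob_sq Y = trace (transpose Y ** Y)"

definition SO :: "(real^'n^'n) set" where
  "SO = {R. orthogonal_matrix R \<and> det R = 1}"

definition W10 :: "real^'n^'n \<Rightarrow> real^'n^'n \<Rightarrow> real" where
  "W10 R G = frob_sq (msym (transpose R ** G - mat 1))"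

definition critical_point_on ::
  "('a::real_normed_vector \<Rightarrow> real) \<Rightarrow> 'a set \<Rightarrow> 'a \<Rightarrow> bool" where
  "critical_point_on f M x \<longleftrightarrow> x \<in> M \<and>
     (\<forall>\<gamma> v. (\<forall>t. \<gamma> t \<in> M) \<and> \<gamma> 0 = x \<and> (\<gamma> has_vector_derivative v) (at 0)
        \<longrightarrow> ((\<lambda>t. f (\<gamma> t)) has_real_derivative 0) (at 0))"

definition mat2 :: "real \<Rightarrow> real \<Rightarrow> real \<Rightarrow> real \<Rightarrow> real^2^2" where
  "mat2 a b c d = (\<chi> i j. if i = 1 then (if j = 1 then a else b)
                               else (if j = 1 then c else d))"

end

theory Submission
  imports Defs
begin

lemma mat2_nth[simp]: "mat2 a b c d $1$1 = a" "mat2 a b c d $1$2 = b" "mat2 a b c d $2$1 = c" "mat2 a b c d $2$2 = d"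
  by (simp_all add: mat2_def)

lemma mat2_eq: "(M::real^2^2) = mat2 (M$1$1) (M$1$2) (M$2$1) (M$2$2)"
  by (simp add: vec_eq_iff forall_2)

lemma mat2_eq_iff: "mat2 a b c d = mat2 a' b' c' d' \<longleftrightarrow> a=a' \<and> b=b' \<and> c=c' \<and> d=d'"
  by (metis mat2_nth)

lemma mat1_2: "(mat 1 :: real^2^2) = mat2 1 0 0 1"
  by (simp add: vec_eq_iff forall_2 mat_def)

lemma mmat1_2: "(- mat 1 :: real^2^2) = mat2 (-1) 0 0 (-1)"
  by (simp add: vec_eq_iff forall_2 mat_def)

lemma W10_formula:
  "W10 (R::real^2^2) (mat2 l1 0 0 l2) = (R$1$1*l1-1)\<^sup>2 + (R$2$2*l2-1)\<^sup>2 + (R$2$1*l2 + R$1$2*l1)\<^sup>2/2"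
  by (simp add: W10_def frob_sq_def msym_def trace_def transpose_def matrix_matrix_mult_def
      sum_2 mat_def power2_eq_square algebra_simps)

definition rot :: "real \<Rightarrow> real \<Rightarrow> real^2^2" where "rot a b = mat2 a (-b) b a"

lemma SO_iff: "R \<in> SO \<longleftrightarrow> (\<exists>a b. a\<^sup>2+b\<^sup>2 = 1 \<and> R = rot a b)"
proof
  assume "R \<in> SO"
  then have o: "transpose R ** R = mat 1" and d: "det R = 1"
    by (auto simp: SO_def orthogonal_matrix_def)
  have e1: "R$1$1^2 + R$2$1^2 = 1" and e2: "R$1$2^2 + R$2$2^2 = 1"
    using o unfolding vec_eq_iff forall_2
    by (auto simp: transpose_def matrix_matrix_mult_def sum_2 mat_def power2_eq_square)
  have d2: "R$1$1 * R$2$2 - R$1$2 * R$2$1 = 1" using d by (simp add: det_2)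
  have "(R$1$1 - R$2$2)^2 + (R$1$2 + R$2$1)^2 = 0"
    using e1 e2 d2 by (simp add: power2_eq_square algebra_simps)
  then have "R$1$1 = R$2$2" "R$1$2 = - R$2$1"
    by (smt (verit) sum_power2_eq_zero_iff)+
  then show "\<exists>a b. a\<^sup>2+b\<^sup>2 = 1 \<and> R = rot a b"
    using e1 by (intro exI[of _ "R$1$1"] exI[of _ "R$2$1"]) (metis mat2_eq rot_def)
next
  assume "\<exists>a b. a\<^sup>2+b\<^sup>2 = 1 \<and> R = rot a b"
  then obtain a b where ab: "a\<^sup>2+b\<^sup>2 = 1" "R = rot a b" by blast
  show "R \<in> SO"
    unfolding SO_def orthogonal_matrix_def using ab
    by (simp add: vec_eq_iff forall_2 det_2 rot_def transpose_def matrix_matrix_mult_def sum_2 mat_def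
        power2_eq_square algebra_simps)
qed

lemma SO_rep: assumes "R \<in> SO" shows "R = rot (R$1$1) (R$2$1)" "(R$1$1)\<^sup>2 + (R$2$1)\<^sup>2 = 1"
proof -
  obtain a b where "a\<^sup>2+b\<^sup>2 = 1" "R = rot a b" using assms SO_iff by blast
  then show "R = rot (R$1$1) (R$2$1)" "(R$1$1)\<^sup>2 + (R$2$1)\<^sup>2 = 1" by (auto simp: rot_def)
qed

lemma W_rot: "a\<^sup>2+b\<^sup>2 = 1 \<Longrightarrow> W10 (rot a b) (mat2 l1 0 0 l2) = ((l1+l2)*a-2)\<^sup>2/2 + (l1-l2)\<^sup>2/2"
proof -
  assume h: "a\<^sup>2+b\<^sup>2 = 1"
  have "W10 (rot a b) (mat2 l1 0 0 l2) = ((l1+l2)*a-2)\<^sup>2/2 + (l1-l2)\<^sup>2/2 + (l1-l2)\<^sup>2/2*(a\<^sup>2+b\<^sup>2-1)"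
    unfolding W10_formula rot_def mat2_nth by (simp add: field_simps power2_eq_square; algebra)
  then show ?thesis using h by simp
qed


lemma W_SO: assumes "R \<in> SO"
  shows "W10 R (mat2 l1 0 0 l2) = ((l1+l2)*R$1$1-2)\<^sup>2/2 + (l1-l2)\<^sup>2/2" "\<bar>R$1$1\<bar> \<le> 1"
proof -
  show "W10 R (mat2 l1 0 0 l2) = ((l1+l2)*R$1$1-2)\<^sup>2/2 + (l1-l2)\<^sup>2/2"
    using W_rot[OF SO_rep(2)[OF assms]] SO_rep(1)[OF assms] by metis
  have "(R$1$1)\<^sup>2 \<le> 1" using SO_rep(2)[OF assms] zero_le_power2[of "R$2$1"] by linarith
  then show "\<bar>R$1$1\<bar> \<le> 1" by (simp add: abs_square_le_1)
qed

lemma SO_pm1: fixes R :: "real^2^2" assumes "R \<in> SO" shows "R$1$1 = 1 \<Longrightarrow> R = mat 1" "R$1$1 = -1 \<Longrightarrow> R = - mat 1"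
proof -
  assume "R$1$1 = 1" then have "R$2$1 = 0" using SO_rep(2)[OF assms] by simp
  then show "R = mat 1" by (subst SO_rep(1)[OF assms]) (simp add: \<open>R$1$1 = 1\<close> rot_def mat1_2)
next
  assume "R$1$1 = -1" then have "R$2$1 = 0" using SO_rep(2)[OF assms] by simp
  then show "R = - mat 1" by (subst SO_rep(1)[OF assms]) (simp add: \<open>R$1$1 = -1\<close> rot_def mmat1_2)
qed

lemma comp11_deriv:
  fixes \<gamma> :: "real \<Rightarrow> real^2^2"
  assumes "(\<gamma> has_vector_derivative v) (at 0)"
  shows "((\<lambda>t. \<gamma> t $1$1) has_real_derivative v$1$1) (at 0)"
proof -
  have bl: "bounded_linear (\<lambda>M::real^2^2. M$1$1)"
  proof -
    have a: "bounded_linear (\<lambda>x::real^2. x$1)" by (rule bounded_linear_vec_nth)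
    have b: "bounded_linear (\<lambda>M::real^2^2. M$1)" by (rule bounded_linear_vec_nth)
    show ?thesis using bounded_linear_compose[OF a b] by simp
  qed
  have "(\<gamma> has_derivative (\<lambda>t. t *\<^sub>R v)) (at 0)" using assms by (simp add: has_vector_derivative_def)
  from bounded_linear.has_derivative[OF bl this]
  have "((\<lambda>t. \<gamma> t $1$1) has_derivative (\<lambda>t. t * v$1$1)) (at 0)" by simp
  moreover have "(\<lambda>t. t * v$1$1) = (*) (v$1$1)" by (auto simp: mult.commute)
  ultimately show ?thesis by (simp add: has_field_derivative_def)
qed

lemma crit_fwd:
  fixes l1 l2 :: real
  assumes s: "l1 + l2 > 0" and cp: "critical_point_on (\<lambda>R. W10 R (mat2 l1 0 0 l2)) SO R"
  shows "R = mat 1 \<or> R = - mat 1 \<or> (R \<in> SO \<and> (l1+l2)*R$1$1 = 2)"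
proof -
  have RSO: "R \<in> SO" using cp by (simp add: critical_point_on_def)
  define a where "a = R$1$1"
  define b where "b = R$2$1"
  have Rab: "R = rot a b" and ab: "a\<^sup>2+b\<^sup>2 = 1" using SO_rep[OF RSO] by (auto simp: a_def b_def)
  define \<gamma> where "\<gamma> t = cos t *\<^sub>R rot a b + sin t *\<^sub>R rot (-b) a" for t
  have geq: "\<gamma> t = rot (a* cos t - b* sin t) (b* cos t + a* sin t)" for t
    by (simp add: \<gamma>_def rot_def mat2_def vec_eq_iff forall_2 algebra_simps)
  have sq: "(a* cos t - b* sin t)\<^sup>2 + (b* cos t + a* sin t)\<^sup>2 = 1" for t
  proof -
    have "(a* cos t - b* sin t)\<^sup>2 + (b* cos t + a* sin t)\<^sup>2 = (a\<^sup>2+b\<^sup>2)*((sin t)\<^sup>2 + (cos t)\<^sup>2)"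
      by algebra
    then show ?thesis using ab by simp
  qed
  have gSO: "\<gamma> t \<in> SO" for t using geq sq SO_iff by blast
  have g0: "\<gamma> 0 = R" using Rab by (simp add: \<gamma>_def)
  have h1: "((\<lambda>x. cos x *\<^sub>R rot a b) has_vector_derivative (cos 0 *\<^sub>R 0 + (- sin 0) *\<^sub>R rot a b)) (at 0)"
    by (rule has_vector_derivative_scaleR[OF DERIV_cos has_vector_derivative_const])
  have h2: "((\<lambda>x. sin x *\<^sub>R rot (-b) a) has_vector_derivative (sin 0 *\<^sub>R 0 + cos 0 *\<^sub>R rot (-b) a)) (at 0)"
    by (rule has_vector_derivative_scaleR[OF DERIV_sin has_vector_derivative_const])
  have gd: "(\<gamma> has_vector_derivative ((cos 0 *\<^sub>R 0 + (- sin 0) *\<^sub>R rot a b) + (sin 0 *\<^sub>R 0 + cos 0 *\<^sub>R rot (-b) a))) (at 0)"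
    unfolding \<gamma>_def[abs_def] by (rule has_vector_derivative_add[OF h1 h2])
  have d0: "((\<lambda>t. W10 (\<gamma> t) (mat2 l1 0 0 l2)) has_real_derivative 0) (at 0)"
    using cp gSO g0 gd unfolding critical_point_on_def by blast
  have fe: "(\<lambda>t. W10 (\<gamma> t) (mat2 l1 0 0 l2)) =
      (\<lambda>t. ((l1+l2)*(a* cos t - b* sin t)-2)\<^sup>2/2 + (l1-l2)\<^sup>2/2)"
    using W_rot[OF sq] geq by presburger
  have d1: "((\<lambda>t. ((l1+l2)*(a* cos t - b* sin t)-2)\<^sup>2/2 + (l1-l2)\<^sup>2/2) has_real_derivative
      ((l1+l2)*a-2)*((l1+l2)*(-b))) (at 0)"
    by (auto intro!: derivative_eq_intros)
  have "((l1+l2)*a-2)*((l1+l2)*(-b)) = 0"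
    using DERIV_unique[OF d1] d0 fe by simp
  then have "b = 0 \<or> (l1+l2)*a = 2" using s by auto
  then show ?thesis
  proof
    assume "b = 0"
    then have "a\<^sup>2 = 1" using ab by simp
    then have "a = 1 \<or> a = -1" by (simp add: power2_eq_1_iff)
    then show ?thesis using SO_pm1[OF RSO] a_def by auto
  qed (use RSO a_def in auto)
qed

lemma crit_back:
  fixes l1 l2 :: real and R :: "real^2^2"
  assumes RSO: "R \<in> SO" and h: "R = mat 1 \<or> R = - mat 1 \<or> (l1+l2)*R$1$1 = 2"
  shows "critical_point_on (\<lambda>R. W10 R (mat2 l1 0 0 l2)) SO R"
  unfolding critical_point_on_def
proof (intro conjI allI impI RSO)
  fix \<gamma> :: "real \<Rightarrow> real^2^2" and v
  assume A: "(\<forall>t. \<gamma> t \<in> SO) \<and> \<gamma> 0 = R \<and> (\<gamma> has_vector_derivative v) (at 0)"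
  define g where "g t = \<gamma> t $1$1" for t
  have dg: "(g has_real_derivative v$1$1) (at 0)" unfolding g_def[abs_def] using comp11_deriv[of \<gamma> v] A by simp
  have gb: "\<bar>g t\<bar> \<le> 1" for t unfolding g_def using W_SO(2)[of "\<gamma> t"] A by simp
  have fe: "(\<lambda>t. W10 (\<gamma> t) (mat2 l1 0 0 l2)) = (\<lambda>t. ((l1+l2)* g t-2)\<^sup>2/2 + (l1-l2)\<^sup>2/2)"
  proof
    fix t show "W10 (\<gamma> t) (mat2 l1 0 0 l2) = ((l1+l2)* g t-2)\<^sup>2/2 + (l1-l2)\<^sup>2/2"
      unfolding g_def using W_SO(1)[of "\<gamma> t" l1 l2] A by blast
  qed
  have d1: "((\<lambda>t. ((l1+l2)* g t-2)\<^sup>2/2 + (l1-l2)\<^sup>2/2) has_real_derivative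
      ((l1+l2)* g 0-2)*((l1+l2)* v$1$1)) (at 0)"
    by (auto intro!: derivative_eq_intros dg)
  have z: "((l1+l2)* g 0-2)*((l1+l2)* v$1$1) = 0"
    using h
  proof (elim disjE)
    assume "R = mat 1"
    then have "g 0 = 1" using A g_def by (simp add: mat_def)
    have "v$1$1 = 0"
      proof (rule DERIV_local_max[OF dg zero_less_one], intro allI impI)
      fix y show "g y \<le> g 0" using gb[of y] \<open>g 0 = 1\<close> by linarith
    qed
    then show ?thesis by simp
  next
    assume "R = - mat 1"
    then have "g 0 = -1" using A g_def by (simp add: mat_def)
    have "v$1$1 = 0"
      proof (rule DERIV_local_min[OF dg zero_less_one], intro allI impI)
      fix y show "g 0 \<le> g y" using gb[of y] \<open>g 0 = -1\<close> by linarith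
    qed
    then show ?thesis by simp
  next
    assume "(l1+l2)*R$1$1 = 2"
    then show ?thesis using A g_def by simp
  qed
  show "((\<lambda>t. W10 (\<gamma> t) (mat2 l1 0 0 l2)) has_real_derivative 0) (at 0)"
    using d1 z fe by simp
qed

lemma ident:
  fixes R :: "real^2^2" and s :: real
  assumes RSO: "R \<in> SO" and s0: "s > 0" and e: "s * R$1$1 = 2"
  shows "(s \<le> 2 \<longrightarrow> R = mat 1) \<and>
    (s > 2 \<longrightarrow> R = rot (2/s) (sqrt (1-(2/s)\<^sup>2)) \<or> R = rot (2/s) (- sqrt (1-(2/s)\<^sup>2)))"
proof -
  have a: "R$1$1 = 2/s" using e s0 by (simp add: field_simps)
  have ab: "(R$1$1)\<^sup>2 + (R$2$1)\<^sup>2 = 1" by (rule SO_rep(2)[OF RSO])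
  have ble: "\<bar>R$1$1\<bar> \<le> 1" using W_SO(2)[OF RSO] .
  have 1: "R = mat 1" if "s \<le> 2"
  proof -
    have "2/s \<ge> 1" using that s0 by (simp add: field_simps)
    then have "R$1$1 = 1" using a ble by linarith
    then show ?thesis using SO_pm1(1)[OF RSO] by blast
  qed
  have 2: "R = rot (2/s) (sqrt (1-(2/s)\<^sup>2)) \<or> R = rot (2/s) (- sqrt (1-(2/s)\<^sup>2))"
  proof -
    have "(R$2$1)\<^sup>2 = 1-(2/s)\<^sup>2" using ab a by simp
    then have "\<bar>R$2$1\<bar> = sqrt (1-(2/s)\<^sup>2)" by (metis real_sqrt_abs)
    then have "R$2$1 = sqrt (1-(2/s)\<^sup>2) \<or> R$2$1 = - sqrt (1-(2/s)\<^sup>2)" by linarith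
    moreover have "R = rot (2/s) (R$2$1)" using SO_rep(1)[OF RSO] a by simp
    ultimately show ?thesis by auto
  qed
  show ?thesis using 1 2 by blast
qed

theorem mainTheorem6:
  fixes l1 l2 :: real
  assumes "l1 \<ge> l2" and "l2 > 0"
  defines "D \<equiv> mat2 l1 0 0 l2"
    and "c \<equiv> 2 / (l1 + l2)"
  defines "R3p \<equiv> mat2 c (- sqrt (1 - c\<^sup>2)) (sqrt (1 - c\<^sup>2)) c"
    and "R3m \<equiv> mat2 c (sqrt (1 - c\<^sup>2)) (- sqrt (1 - c\<^sup>2)) c"
  shows "({R. critical_point_on (\<lambda>R. W10 R D) SO R}
           = {mat 1, - mat 1} \<union> (if l1 + l2 > 2 then {R3p, R3m} else {})) \<and>
         W10 (mat 1) D = (l1 - 1)\<^sup>2 + (l2 - 1)\<^sup>2 \<and>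
         W10 (- mat 1) D = (l1 + 1)\<^sup>2 + (l2 + 1)\<^sup>2 \<and>
         (l1 + l2 > 2 \<longrightarrow> W10 R3p D = (l1 - l2)\<^sup>2 / 2 \<and> W10 R3m D = (l1 - l2)\<^sup>2 / 2) \<and>
         {R \<in> SO. \<forall>S \<in> SO. W10 S D \<le> W10 R D} = {- mat 1} \<and>
         (l1 + l2 \<le> 2 \<longrightarrow> {R \<in> SO. \<forall>S \<in> SO. W10 R D \<le> W10 S D} = {mat 1}) \<and>
         (l1 + l2 > 2 \<longrightarrow> {R \<in> SO. \<forall>S \<in> SO. W10 R D \<le> W10 S D} = {R3p, R3m})"
proof -
  define s where "s = l1 + l2"
  define K where "K = (l1-l2)\<^sup>2/2"
  have s0: "s > 0" using assms s_def by simp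
  have Dd: "D = mat2 l1 0 0 l2" by (simp add: D_def)
  have WS: "W10 R D = (s*R$1$1-2)\<^sup>2/2 + K" "\<bar>R$1$1\<bar> \<le> 1" if "R \<in> SO" for R
    using W_SO(1)[of R l1 l2] W_SO(2)[of R] that by (simp_all add: Dd s_def K_def)
  have ISO: "(mat 1::real^2^2) \<in> SO" unfolding SO_iff by (rule exI[of _ 1], rule exI[of _ 0]) (simp add: rot_def mat1_2)
  have mISO: "(- mat 1::real^2^2) \<in> SO" unfolding SO_iff by (rule exI[of _ "-1"], rule exI[of _ 0]) (simp add: rot_def mmat1_2)
  have I11: "(mat 1 :: real^2^2)$1$1 = 1" by (simp add: mat_def)
  have mI11: "(- mat 1 :: real^2^2)$1$1 = -1" by (simp add: mat_def)
  have cs: "c = 2/s" by (simp add: c_def s_def)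
  have R3r: "R3p = rot (2/s) (sqrt (1-(2/s)\<^sup>2)) \<and> R3m = rot (2/s) (- sqrt (1-(2/s)\<^sup>2))"
    by (simp add: R3p_def R3m_def rot_def cs)
  have R3: "R3p \<in> SO \<and> R3m \<in> SO \<and> R3p$1$1 = c \<and> R3m$1$1 = c \<and>
            R3p = rot (2/s) (sqrt (1-(2/s)\<^sup>2)) \<and> R3m = rot (2/s) (- sqrt (1-(2/s)\<^sup>2))" if "s > 2"
  proof -
    have "c < 1" "c > 0" using that cs s0 by (simp_all add: divide_less_eq)
    then have "c\<^sup>2 \<le> 1" by (simp add: abs_square_le_1)
    then have q: "c\<^sup>2 + (sqrt (1-c\<^sup>2))\<^sup>2 = 1" "c\<^sup>2 + (- sqrt (1-c\<^sup>2))\<^sup>2 = 1" by simp_all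
    have e: "R3p = rot c (sqrt (1-c\<^sup>2))" "R3m = rot c (- sqrt (1-c\<^sup>2))"
      by (simp_all add: R3p_def R3m_def rot_def)
    have "R3p \<in> SO" "R3m \<in> SO" using q e SO_iff by blast+
    then show ?thesis using e cs by (simp add: rot_def)
  qed
  have crit: "{R. critical_point_on (\<lambda>R. W10 R D) SO R}
           = {mat 1, - mat 1} \<union> (if l1 + l2 > 2 then {R3p, R3m} else {})"
  proof (rule set_eqI, rule iffI)
    fix R :: "real^2^2" assume "R \<in> {R. critical_point_on (\<lambda>R. W10 R D) SO R}"
    then have "R = mat 1 \<or> R = - mat 1 \<or> (R \<in> SO \<and> s*R$1$1 = 2)"
      using crit_fwd[of l1 l2 R] s0 by (simp add: Dd s_def)
    then show "R \<in> {mat 1, - mat 1} \<union> (if l1 + l2 > 2 then {R3p, R3m} else {})"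
    proof (elim disjE conjE)
      assume "R \<in> SO" "s*R$1$1 = 2"
      from ident[OF this(1) s0 this(2)] R3r show ?thesis
        by (cases "s > 2") (auto simp: s_def)
    qed auto
  next
    fix R :: "real^2^2" assume "R \<in> {mat 1, - mat 1} \<union> (if l1 + l2 > 2 then {R3p, R3m} else {})"
    then have "(R \<in> SO \<and> (R = mat 1 \<or> R = - mat 1 \<or> s*R$1$1 = 2))"
    proof (cases "R = mat 1 \<or> R = - mat 1")
      case True then show ?thesis using ISO mISO by auto
    next
      case False
      then have s2: "s > 2" and RR: "R = R3p \<or> R = R3m" using \<open>R \<in> _\<close> by (auto simp: s_def split: if_splits)
      have "s*c = 2" using cs s0 by simp
      then show ?thesis using R3[OF s2] RR by auto
    qed
    then show "R \<in> {R. critical_point_on (\<lambda>R. W10 R D) SO R}"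
      using crit_back[of R l1 l2] by (auto simp: Dd s_def)
  qed
  have v1: "W10 (mat 1) D = (l1 - 1)\<^sup>2 + (l2 - 1)\<^sup>2"
    by (simp add: Dd W10_formula mat_def)
  have v2: "W10 (- mat 1) D = (l1 + 1)\<^sup>2 + (l2 + 1)\<^sup>2"
    by (simp add: Dd W10_formula mat_def power2_eq_square algebra_simps)
  have v3: "l1 + l2 > 2 \<longrightarrow> W10 R3p D = (l1 - l2)\<^sup>2 / 2 \<and> W10 R3m D = (l1 - l2)\<^sup>2 / 2"
  proof
    assume "l1 + l2 > 2"
    then have "s > 2" by (simp add: s_def)
    then have "s*c = 2" using cs s0 by simp
    then show "W10 R3p D = (l1 - l2)\<^sup>2 / 2 \<and> W10 R3m D = (l1 - l2)\<^sup>2 / 2"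
    proof -
      have "R3p \<in> SO" "R3m \<in> SO" "R3p$1$1 = c" "R3m$1$1 = c" using R3[OF \<open>s>2\<close>] by auto
      then show ?thesis using WS \<open>s*c = 2\<close> by (simp add: K_def)
    qed
  qed
  have ineqmax: "(s*a-2)\<^sup>2 \<le> (s*(-1)-2)\<^sup>2 \<and> ((s*(-1)-2)\<^sup>2 \<le> (s*a-2)\<^sup>2 \<longrightarrow> a = -1)"
    if "\<bar>a\<bar> \<le> 1" for a
  proof -
    have f: "(s*(-1)-2)\<^sup>2 - (s*a-2)\<^sup>2 = (s*(1-a)+4)*(s*(1+a))" by (simp add: power2_eq_square algebra_simps)
    have p1: "s*(1-a)+4 > 0" using that s0 by (smt (verit) mult_nonneg_nonneg)
    have p2: "s*(1+a) \<ge> 0" using that s0 by (simp add: abs_le_iff)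
    have "(s*(-1)-2)\<^sup>2 - (s*a-2)\<^sup>2 \<ge> 0" using f p1 p2 by simp
    moreover have "a = -1" if "(s*(-1)-2)\<^sup>2 \<le> (s*a-2)\<^sup>2"
    proof -
      have "(s*(1-a)+4)*(s*(1+a)) \<le> 0" using f that by linarith
      then have "s*(1+a) \<le> 0" using p1 by (simp add: mult_le_0_iff)
      then have "1 + a \<le> 0" using s0 by (simp add: mult_le_0_iff)
      then show ?thesis using \<open>\<bar>a\<bar> \<le> 1\<close> by linarith
    qed
    ultimately show ?thesis by linarith
  qed
  have max: "{R \<in> SO. \<forall>S \<in> SO. W10 S D \<le> W10 R D} = {- mat 1}"
  proof (rule set_eqI, rule iffI)
    fix R :: "real^2^2" assume "R \<in> {R \<in> SO. \<forall>S \<in> SO. W10 S D \<le> W10 R D}"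
    then have RS: "R \<in> SO" and le: "W10 (- mat 1) D \<le> W10 R D" using mISO by auto
    then have "(s*(-1)-2)\<^sup>2 \<le> (s*R$1$1-2)\<^sup>2" using WS[OF RS] WS[OF mISO] mI11 by simp
    then have "R$1$1 = -1" using ineqmax[OF WS(2)[OF RS]] by blast
    then show "R \<in> {- mat 1}" using SO_pm1(2)[OF RS] by simp
  next
    fix R :: "real^2^2" assume "R \<in> {- mat 1}"
    then have R: "R = - mat 1" by simp
    have "W10 S D \<le> W10 R D" if "S \<in> SO" for S
      using ineqmax[OF WS(2)[OF that]] WS[OF that] WS[OF mISO] mI11 R by simp
    then show "R \<in> {R \<in> SO. \<forall>S \<in> SO. W10 S D \<le> W10 R D}" using R mISO by auto
  qed
  have min1: "l1 + l2 \<le> 2 \<longrightarrow> {R \<in> SO. \<forall>S \<in> SO. W10 R D \<le> W10 S D} = {mat 1}"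
  proof
    assume "l1 + l2 \<le> 2"
    then have s2: "s \<le> 2" by (simp add: s_def)
    have ineq: "(s*1-2)\<^sup>2 \<le> (s*a-2)\<^sup>2 \<and> ((s*a-2)\<^sup>2 \<le> (s*1-2)\<^sup>2 \<longrightarrow> a = 1)"
      if "\<bar>a\<bar> \<le> 1" for a
    proof -
      have f: "(s*a-2)\<^sup>2 - (s*1-2)\<^sup>2 = s*((1-a)*(4 - s*(a+1)))" by (simp add: power2_eq_square algebra_simps)
      have a1: "1 - a \<ge> 0" "a + 1 \<ge> 0" using that by (simp_all add: abs_le_iff)
      have "s*(a+1) \<le> s*2" using s0 that by (simp add: abs_le_iff)
      then have p: "4 - s*(a+1) \<ge> 0" using s2 by linarith
      have "(s*a-2)\<^sup>2 - (s*1-2)\<^sup>2 \<ge> 0" using f p a1 s0 by simp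
      moreover have "a = 1" if "(s*a-2)\<^sup>2 \<le> (s*1-2)\<^sup>2"
      proof (rule ccontr)
        assume "a \<noteq> 1"
        then have "1 - a > 0" using a1 by simp
        moreover have "s*(a+1) < s*2" using s0 \<open>1 - a > 0\<close> by simp
        then have "4 - s*(a+1) > 0" using s2 by linarith
        ultimately have "s*((1-a)*(4 - s*(a+1))) > 0" using s0 by simp
        then show False using f that by linarith
      qed
      ultimately show ?thesis by linarith
    qed
    show "{R \<in> SO. \<forall>S \<in> SO. W10 R D \<le> W10 S D} = {mat 1}"
    proof (rule set_eqI, rule iffI)
      fix R :: "real^2^2" assume "R \<in> {R \<in> SO. \<forall>S \<in> SO. W10 R D \<le> W10 S D}"
      then have RS: "R \<in> SO" and le: "W10 R D \<le> W10 (mat 1) D" using ISO by auto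
      then have "(s*R$1$1-2)\<^sup>2 \<le> (s*1-2)\<^sup>2" using WS[OF RS] WS[OF ISO] I11 by simp
      then have "R$1$1 = 1" using ineq[OF WS(2)[OF RS]] by blast
      then show "R \<in> {mat 1}" using SO_pm1(1)[OF RS] by simp
    next
      fix R :: "real^2^2" assume "R \<in> {mat 1}"
      then have R: "R = mat 1" by simp
      have "W10 R D \<le> W10 S D" if "S \<in> SO" for S
        using ineq[OF WS(2)[OF that]] WS[OF that] WS[OF ISO] I11 R by simp
      then show "R \<in> {R \<in> SO. \<forall>S \<in> SO. W10 R D \<le> W10 S D}" using R ISO by auto
    qed
  qed
  have min2: "l1 + l2 > 2 \<longrightarrow> {R \<in> SO. \<forall>S \<in> SO. W10 R D \<le> W10 S D} = {R3p, R3m}"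
  proof
    assume "l1 + l2 > 2"
    then have s2: "s > 2" by (simp add: s_def)
    note R3s = R3[OF s2]
    have sc: "s*c = 2" using cs s0 by simp
    have R3a: "R3p \<in> SO" "R3m \<in> SO" "R3p$1$1 = c" "R3m$1$1 = c" using R3s by auto
    have WR3: "W10 R3p D = K" "W10 R3m D = K" using R3a WS sc by simp_all
    show "{R \<in> SO. \<forall>S \<in> SO. W10 R D \<le> W10 S D} = {R3p, R3m}"
    proof (rule set_eqI, rule iffI)
      fix R :: "real^2^2" assume "R \<in> {R \<in> SO. \<forall>S \<in> SO. W10 R D \<le> W10 S D}"
      then have RS: "R \<in> SO" and le: "W10 R D \<le> W10 R3p D" using R3a by auto
      then have "(s*R$1$1-2)\<^sup>2 \<le> 0" using WS[OF RS] WR3 by simp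
      then have "s*R$1$1 = 2" by simp
      from ident[OF RS s0 this] s2 R3r show "R \<in> {R3p, R3m}" by auto
    next
      fix R :: "real^2^2" assume "R \<in> {R3p, R3m}"
      then have R: "R \<in> SO" "W10 R D = K" using R3a WR3 by auto
      have "W10 R D \<le> W10 S D" if "S \<in> SO" for S
        using WS[OF that] R by simp
      then show "R \<in> {R \<in> SO. \<forall>S \<in> SO. W10 R D \<le> W10 S D}" using R by auto
    qed
  qed
  show ?thesis using crit v1 v2 v3 max min1 min2 by blast
qed

end
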